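(* Let $V$ be a complex vector space of dimension $k\ge2$, with basis $e_1,\dots,e_k$ and dual basis $\alpha_1,\dots,\alpha_k$. Let $$T_k=\sum_{1\le i<j\le k}\big(\alpha_i\otimes\alpha_j-\alpha_j\otimes\alpha_i\big)\otimes(e_i\wedge e_j)\in V^*\otimes V^*\otimes\Lambda^2V.$$ Then $$\underline{R}(T_k)\ge\left\lceil\frac{k^2}{2}\right\rceil=\binom{k}{2}+\left\lceil\frac{k}{2}\right\rceil.$$
   Context: The border rank $\underline{R}(T)$ is the smallest $r$ such that $T$ is a limit of sums of $r$ rank-one tensors $a\otimes b\otimes c$. *)

theory Defs
  imports "HOL-Analysis.Analysis"
begin

text \<open>A tensor in A (x) B (x) C with respect to fixed bases indexed by finite sets
  I, J, K is its coordinate function; coordinates outside I x J x K are ignored.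
  The space is finite dimensional, so its (unique Hausdorff vector-space) topology is
  coordinatewise convergence.\<close>

definition rank_one_sum ::
  "nat \<Rightarrow> (nat \<Rightarrow> 'i \<Rightarrow> complex) \<Rightarrow> (nat \<Rightarrow> 'j \<Rightarrow> complex) \<Rightarrow> (nat \<Rightarrow> 'k \<Rightarrow> complex)
     \<Rightarrow> 'i \<Rightarrow> 'j \<Rightarrow> 'k \<Rightarrow> complex" where
  "rank_one_sum r a b c = (\<lambda>i j p. \<Sum>l<r. a l i * b l j * c l p)"

definition border_rank_le ::
  "'i set \<Rightarrow> 'j set \<Rightarrow> 'k set \<Rightarrow> ('i \<Rightarrow> 'j \<Rightarrow> 'k \<Rightarrow> complex) \<Rightarrow> nat \<Rightarrow> bool" where
  "border_rank_le I J K T r \<longleftrightarrow>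
     (\<exists>a b c. \<forall>i\<in>I. \<forall>j\<in>J. \<forall>p\<in>K.
        ((\<lambda>n. rank_one_sum r (a n) (b n) (c n) i j p) \<longlongrightarrow> T i j p) sequentially)"

definition border_rank ::
  "'i set \<Rightarrow> 'j set \<Rightarrow> 'k set \<Rightarrow> ('i \<Rightarrow> 'j \<Rightarrow> 'k \<Rightarrow> complex) \<Rightarrow> nat" where
  "border_rank I J K T = (LEAST r. border_rank_le I J K T r)"

text \<open>The tensor T_k in V* (x) V* (x) Lambda^2 V, V = C^k with basis e_0..e_{k-1},
  dual basis alpha_i, and Lambda^2 V with basis e_p wedge e_q, p < q, indexed by (p,q).\<close>

definition wedge_index :: "nat \<Rightarrow> (nat \<times> nat) set" where
  "wedge_index k = {(p, q). p < q \<and> q < k}"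

definition T_tensor :: "nat \<Rightarrow> nat \<Rightarrow> (nat \<times> nat) \<Rightarrow> complex" where
  "T_tensor i j pq = (if (i, j) = pq then 1 else if (j, i) = pq then -1 else 0)"

end

theory Submission
  imports Defs "Jordan_Normal_Form.Determinant"
begin

definition Kf :: "(nat \<Rightarrow> nat \<Rightarrow> nat \<times> nat \<Rightarrow> complex) \<Rightarrow> nat \<times> nat \<times> nat \<Rightarrow> nat \<times> nat \<times> nat \<Rightarrow> complex" where
  "Kf X R d = (if fst d = snd (snd R) then X (fst (snd R)) (fst R) (snd d) else 0)
             - (if fst d = fst (snd R) then X (snd (snd R)) (fst R) (snd d) else 0)"

definition Mf :: "(nat \<Rightarrow> nat \<times> nat \<times> nat) \<Rightarrow> nat \<Rightarrow> (nat \<Rightarrow> nat \<Rightarrow> nat \<times> nat \<Rightarrow> complex) \<Rightarrow> complex mat" where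
  "Mf h N X = mat N N (\<lambda>(i, j). Kf X (h i) (h j))"

definition uu :: "(nat \<Rightarrow> complex) \<Rightarrow> (nat \<Rightarrow> complex) \<Rightarrow> nat \<Rightarrow> nat \<times> nat \<times> nat \<Rightarrow> complex" where
  "uu A B x R = B (fst R) * ((if x = snd (snd R) then A (fst (snd R)) else 0)
                             - (if x = fst (snd R) then A (snd (snd R)) else 0))"

lemma Kf_rank_one_sum:
  "Kf (rank_one_sum r a b c) R d = (\<Sum>l<r. c l (snd d) * uu (a l) (b l) (fst d) R)"
  unfolding Kf_def uu_def rank_one_sum_def
  by (auto simp: algebra_simps sum_subtractf sum_distrib_left)

lemma uu_lin: "(\<Sum>y<k. A y * uu A B y R) = 0"
  if "fst (snd R) < k" "snd (snd R) < k" "fst (snd R) \<noteq> snd (snd R)"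
proof -
  have "(\<Sum>y<k. A y * uu A B y R) = (\<Sum>y<k. (if y = snd (snd R) then B (fst R) * A y * A (fst (snd R)) else 0))
     - (\<Sum>y<k. (if y = fst (snd R) then B (fst R) * A y * A (snd (snd R)) else 0))"
    unfolding uu_def sum_subtractf[symmetric]
    by (rule sum.cong) (auto simp: algebra_simps)
  also have "\<dots> = 0" using that by simp
  finally show ?thesis .
qed

definition sg :: "nat \<Rightarrow> nat \<Rightarrow> nat" where "sg m0 s = (if s < m0 then s else Suc s)"

lemma sum_skip:
  fixes g :: "nat \<Rightarrow> 'a::comm_monoid_add"
  assumes "m0 < Suc m"
  shows "(\<Sum>y<Suc m. g y) = g m0 + (\<Sum>s<m. g (sg m0 s))"
proof -
  have inj: "inj_on (sg m0) {..<m}" unfolding sg_def inj_on_def by auto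
  have im: "sg m0 ` {..<m} = {..<Suc m} - {m0}"
  proof
    show "sg m0 ` {..<m} \<subseteq> {..<Suc m} - {m0}" unfolding sg_def using assms by auto
    show "{..<Suc m} - {m0} \<subseteq> sg m0 ` {..<m}"
    proof
      fix y assume y: "y \<in> {..<Suc m} - {m0}"
      show "y \<in> sg m0 ` {..<m}"
      proof (cases "y < m0")
        case True
        then show ?thesis using y assms unfolding sg_def by (intro image_eqI[of _ _ y]) auto
      next
        case False
        then show ?thesis using y assms unfolding sg_def by (intro image_eqI[of _ _ "y - 1"]) auto
      qed
    qed
  qed
  have "(\<Sum>s<m. g (sg m0 s)) = (\<Sum>y\<in>{..<Suc m} - {m0}. g y)"
    using sum.reindex[OF inj, of g] im by simp
  moreover have "(\<Sum>y<Suc m. g y) = g m0 + (\<Sum>y\<in>{..<Suc m} - {m0}. g y)"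
    using assms by (intro sum.remove) auto
  ultimately show ?thesis by simp
qed

definition coef :: "(nat \<Rightarrow> complex) \<Rightarrow> nat \<Rightarrow> nat \<Rightarrow> nat \<Rightarrow> complex" where
  "coef A m0 x s = (if x = m0 then - A (sg m0 s) / A m0 else if x = sg m0 s then 1 else 0)"

lemma uu_decomp:
  assumes m0: "m0 < Suc m" and z: "A m0 = 0 \<Longrightarrow> \<forall>y<Suc m. A y = 0" and x: "x < Suc m"
    and R: "fst (snd R) < Suc m" "snd (snd R) < Suc m" "fst (snd R) \<noteq> snd (snd R)"
  shows "uu A B x R = (\<Sum>s<m. coef A m0 x s * uu A B (sg m0 s) R)"
proof (cases "x = m0")
  case False
  have inj: "inj_on (sg m0) {..<m}" unfolding sg_def inj_on_def by auto
  obtain s0 where s0: "s0 < m" "sg m0 s0 = x"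
  proof (cases "x < m0")
    case True then show ?thesis using that[of x] x m0 unfolding sg_def by auto
  next
    case f: False then show ?thesis using that[of "x - 1"] x m0 False unfolding sg_def by auto
  qed
  have "(\<Sum>s<m. coef A m0 x s * uu A B (sg m0 s) R) = (\<Sum>s<m. if s = s0 then uu A B x R else 0)"
  proof (rule sum.cong)
    fix s assume s: "s \<in> {..<m}"
    have "sg m0 s = x \<longleftrightarrow> s = s0" using inj s s0 by (auto simp: inj_on_def)
    then show "coef A m0 x s * uu A B (sg m0 s) R = (if s = s0 then uu A B x R else 0)"
      unfolding coef_def using False s0 by auto
  qed simp
  also have "\<dots> = uu A B x R" using s0 by simp
  finally show ?thesis by simp
next
  case True
  have lin: "A m0 * uu A B m0 R + (\<Sum>s<m. A (sg m0 s) * uu A B (sg m0 s) R) = 0"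
    using uu_lin[OF R, of A B] sum_skip[OF m0, of "\<lambda>y. A y * uu A B y R"] by simp
  show ?thesis
  proof (cases "A m0 = 0")
    case True
    then have "\<forall>y<Suc m. A y = 0" using z by blast
    then have "uu A B x R = 0" using R unfolding uu_def by auto
    moreover have "(\<Sum>s<m. coef A m0 x s * uu A B (sg m0 s) R) = 0"
      using True \<open>x = m0\<close> by (simp add: coef_def)
    ultimately show ?thesis by simp
  next
    case False
    have "(\<Sum>s<m. coef A m0 x s * uu A B (sg m0 s) R)
        = - (\<Sum>s<m. A (sg m0 s) * uu A B (sg m0 s) R) / A m0"
      using \<open>x = m0\<close> by (simp add: coef_def sum_divide_distrib sum_negf[symmetric])
    also have "\<dots> = uu A B x R" using lin False \<open>x = m0\<close>
      by (simp add: field_simps add_eq_0_iff)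
    finally show ?thesis by simp
  qed
qed

lemma sum_div_mod_group:
  fixes G :: "nat \<Rightarrow> nat \<Rightarrow> 'a::comm_monoid_add"
  assumes "m > 0"
  shows "(\<Sum>t<r*m. G (t div m) (t mod m)) = (\<Sum>l<r. \<Sum>s<m. G l s)"
proof -
  have "(\<Sum>t<r*m. G (t div m) (t mod m)) = (\<Sum>l<r. \<Sum>t\<in>{l*m..<l*m+m}. G (t div m) (t mod m))"
    by (rule sum.nat_group[symmetric])
  also have "\<dots> = (\<Sum>l<r. \<Sum>s<m. G l s)"
  proof (rule sum.cong)
    fix l
    have "(\<Sum>t\<in>{l*m..<l*m+m}. G (t div m) (t mod m)) = (\<Sum>t\<in>{0+l*m..<m+l*m}. G (t div m) (t mod m))"
      by (simp add: add.commute)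
    also have "\<dots> = (\<Sum>s\<in>{0..<m}. G ((s + l*m) div m) ((s + l*m) mod m))"
      by (rule sum.shift_bounds_nat_ivl)
    also have "\<dots> = (\<Sum>s<m. G l s)"
      using assms by (intro sum.cong) auto
    finally show "(\<Sum>t\<in>{l*m..<l*m+m}. G (t div m) (t mod m)) = (\<Sum>s<m. G l s)" .
  qed simp
  finally show ?thesis .
qed

lemma det_zero_row:
  assumes "Q \<in> carrier_mat N N" "k < N" "\<And>j. j < N \<Longrightarrow> Q $$ (k, j) = 0"
  shows "det Q = (0::complex)"
proof -
  have "det Q = (\<Sum>p \<in> {p. p permutes {0..<N}}. signof p * (\<Prod>i = 0..<N. Q $$ (i, p i)))"
    by (rule det_def'[OF assms(1)])
  also have "\<dots> = 0"
  proof (rule sum.neutral, rule ballI)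
    fix p assume "p \<in> {p. p permutes {0..<N}}"
    then have "p k < N" using assms(2) permutes_in_image by fastforce
    then have "(\<Prod>i = 0..<N. Q $$ (i, p i)) = 0"
      using assms(2,3) \<open>p k < N\<close> by (intro prod_zero) (auto intro!: bexI[of _ k])
    then show "signof p * (\<Prod>i = 0..<N. Q $$ (i, p i)) = 0" by simp
  qed
  finally show ?thesis .
qed

lemma det_rank_sum_zero:
  assumes h: "bij_betw h {0..<N} ({..<k} \<times> wedge_index k)" and small: "r * (k - 1) < N" and k: "k \<ge> 2"
  shows "det (Mf h N (rank_one_sum r a b c)) = 0"
proof -
  define m where "m = k - 1"
  have km: "k = Suc m" and mpos: "m > 0" using k unfolding m_def by auto
  define m0 where "m0 l = (if \<exists>y<k. a l y \<noteq> 0 then SOME y. y < k \<and> a l y \<noteq> 0 else 0)" for l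
  have m0P: "m0 l < Suc m \<and> (a l (m0 l) = 0 \<longrightarrow> (\<forall>y<Suc m. a l y = 0))" for l
  proof (cases "\<exists>y<k. a l y \<noteq> 0")
    case True
    then have ex: "\<exists>y. y < k \<and> a l y \<noteq> 0" by blast
    have "m0 l = (SOME y. y < k \<and> a l y \<noteq> 0)" using True unfolding m0_def by simp
    with someI_ex[OF ex] have "m0 l < k \<and> a l (m0 l) \<noteq> 0" by simp
    then show ?thesis using km by simp
  next
    case False
    then have "m0 l = 0" unfolding m0_def by (simp only: if_False)
    then show ?thesis using False km by simp
  qed
  have m0k: "m0 l < Suc m" for l using m0P by blast
  have m0z: "a l (m0 l) = 0 \<Longrightarrow> \<forall>y<Suc m. a l y = 0" for l using m0P by blast
  have hD: "h i \<in> {..<k} \<times> wedge_index k" if "i < N" for i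
    using bij_betw_apply[OF h] that by simp
  define P where "P = mat N N (\<lambda>(i,t). if t < r*m then uu (a (t div m)) (b (t div m)) (sg (m0 (t div m)) (t mod m)) (h i) else 0)"
  define Q where "Q = mat N N (\<lambda>(t,j). if t < r*m then c (t div m) (snd (h j)) * coef (a (t div m)) (m0 (t div m)) (fst (h j)) (t mod m) else 0)"
  have PQ: "Mf h N (rank_one_sum r a b c) = P * Q"
  proof (rule eq_matI)
    fix i j assume i: "i < dim_row (P * Q)" and j: "j < dim_col (P * Q)"
    then have i: "i < N" and j: "j < N" by (auto simp: P_def Q_def)
    have Ri: "fst (snd (h i)) < Suc m" "snd (snd (h i)) < Suc m" "fst (snd (h i)) \<noteq> snd (snd (h i))"
      using hD[OF i] km by (auto simp: wedge_index_def)
    have xj: "fst (h j) < Suc m" using hD[OF j] km by auto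
    have "(P * Q) $$ (i, j) = (\<Sum>t\<in>{0..<N}. P $$ (i, t) * Q $$ (t, j))"
      using i j by (simp add: P_def Q_def scalar_prod_def)
    also have "\<dots> = (\<Sum>t\<in>{0..<N}. if t < r*m then uu (a (t div m)) (b (t div m)) (sg (m0 (t div m)) (t mod m)) (h i)
          * (c (t div m) (snd (h j)) * coef (a (t div m)) (m0 (t div m)) (fst (h j)) (t mod m)) else 0)"
      using i j by (intro sum.cong) (auto simp: P_def Q_def)
    also have "\<dots> = (\<Sum>t\<in>{0..<N} \<inter> {t. t < r*m}. uu (a (t div m)) (b (t div m)) (sg (m0 (t div m)) (t mod m)) (h i)
          * (c (t div m) (snd (h j)) * coef (a (t div m)) (m0 (t div m)) (fst (h j)) (t mod m)))"
      by (simp add: sum.inter_restrict)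
    also have "{0..<N} \<inter> {t. t < r*m} = {..<r*m}" using small m_def by auto
    also have "(\<Sum>t<r*m. uu (a (t div m)) (b (t div m)) (sg (m0 (t div m)) (t mod m)) (h i)
          * (c (t div m) (snd (h j)) * coef (a (t div m)) (m0 (t div m)) (fst (h j)) (t mod m)))
        = (\<Sum>l<r. \<Sum>s<m. uu (a l) (b l) (sg (m0 l) s) (h i)
          * (c l (snd (h j)) * coef (a l) (m0 l) (fst (h j)) s))"
      by (rule sum_div_mod_group[OF mpos])
    also have "\<dots> = (\<Sum>l<r. c l (snd (h j)) * (\<Sum>s<m. coef (a l) (m0 l) (fst (h j)) s * uu (a l) (b l) (sg (m0 l) s) (h i)))"
      by (simp add: sum_distrib_left algebra_simps)
    also have "\<dots> = (\<Sum>l<r. c l (snd (h j)) * uu (a l) (b l) (fst (h j)) (h i))"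
      using uu_decomp[OF m0k m0z xj Ri] by simp
    also have "\<dots> = Mf h N (rank_one_sum r a b c) $$ (i, j)"
      using i j by (simp add: Mf_def Kf_rank_one_sum)
    finally show "Mf h N (rank_one_sum r a b c) $$ (i, j) = (P * Q) $$ (i, j)" by simp
  qed (auto simp: Mf_def P_def Q_def)
  have P: "P \<in> carrier_mat N N" and Q: "Q \<in> carrier_mat N N" by (auto simp: P_def Q_def)
  have "det Q = 0"
    by (rule det_zero_row[OF Q, of "N - 1"]) (use small in \<open>auto simp: Q_def m_def\<close>)
  then show ?thesis using PQ det_mult[OF P Q] by simp
qed

definition Wf :: "(nat \<times> nat \<times> nat \<Rightarrow> complex) \<Rightarrow> nat \<Rightarrow> nat \<Rightarrow> nat \<Rightarrow> complex" where
  "Wf V x p q = (if p < q then V (x, (p, q)) else if q < p then - V (x, (q, p)) else 0)"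

lemma T_eq: "T_tensor i j (p,q) = (if i = p \<and> j = q then 1 else if j = p \<and> i = q then -1 else 0)"
  by (simp add: T_tensor_def)

lemma T_mul:
  fixes V :: "nat \<times> nat \<Rightarrow> complex"
  assumes "p < q"
  shows "T_tensor a j (p,q) * V (p,q) = (if (p,q) = (a, j) then V (p,q) else 0) - (if (p,q) = (j, a) then V (p,q) else 0)"
  using assms by (auto simp: T_eq)

lemma fin_w: "finite (wedge_index k)"
  by (rule finite_subset[of _ "{..<k} \<times> {..<k}"]) (auto simp: wedge_index_def)

lemma sumT:
  fixes V :: "nat \<times> nat \<Rightarrow> complex"
  assumes "a < k" "j < k"
  shows "(\<Sum>\<beta>\<in>wedge_index k. T_tensor a j \<beta> * V \<beta>) = (if a < j then V (a, j) else if j < a then - V (j, a) else 0)"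
proof -
  have X: "T_tensor a j \<beta> * V \<beta> = (if \<beta> = (a, j) then V \<beta> else 0) - (if \<beta> = (j, a) then V \<beta> else 0)"
    if b: "\<beta> \<in> wedge_index k" for \<beta>
  proof -
    obtain p q where pq: "\<beta> = (p, q)" by (cases \<beta>)
    have "p < q" using b pq by (simp add: wedge_index_def)
    from T_mul[OF this, of a j V] show ?thesis unfolding pq .
  qed
  have "(\<Sum>\<beta>\<in>wedge_index k. T_tensor a j \<beta> * V \<beta>)
      = (\<Sum>\<beta>\<in>wedge_index k. (if \<beta> = (a, j) then V \<beta> else 0) - (if \<beta> = (j, a) then V \<beta> else 0))"
    using X by (rule sum.cong[OF refl])
  also have "\<dots> = (\<Sum>\<beta>\<in>wedge_index k. (if \<beta> = (a, j) then V \<beta> else 0)) - (\<Sum>\<beta>\<in>wedge_index k. (if \<beta> = (j, a) then V \<beta> else 0))"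
    by (rule sum_subtractf)
  also have "\<dots> = (if (a, j) \<in> wedge_index k then V (a, j) else 0) - (if (j, a) \<in> wedge_index k then V (j, a) else 0)"
    using fin_w by (simp only: sum.delta)
  also have "\<dots> = (if a < j then V (a, j) else if j < a then - V (j, a) else 0)"
    using assms by (auto simp: wedge_index_def)
  finally show ?thesis .
qed

lemma sumK:
  assumes "j < k" "a < k" "b < k"
  shows "(\<Sum>d\<in>{..<k} \<times> wedge_index k. Kf T_tensor (j, a, b) d * V d) = Wf V b a j - Wf V a b j"
proof -
  have fin: "finite (wedge_index k)"
    by (rule finite_subset[of _ "{..<k} \<times> {..<k}"]) (auto simp: wedge_index_def)
  have "(\<Sum>d\<in>{..<k} \<times> wedge_index k. Kf T_tensor (j, a, b) d * V d)
     = (\<Sum>x<k. \<Sum>\<beta>\<in>wedge_index k. Kf T_tensor (j, a, b) (x, \<beta>) * V (x, \<beta>))"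
    by (simp add: sum.cartesian_product)
  also have "\<dots> = (\<Sum>x<k. (if x = b then (\<Sum>\<beta>\<in>wedge_index k. T_tensor a j \<beta> * V (x, \<beta>)) else 0)
       - (if x = a then (\<Sum>\<beta>\<in>wedge_index k. T_tensor b j \<beta> * V (x, \<beta>)) else 0))"
    by (rule sum.cong) (auto simp: Kf_def algebra_simps sum_subtractf)
  also have "\<dots> = (\<Sum>\<beta>\<in>wedge_index k. T_tensor a j \<beta> * V (b, \<beta>)) - (\<Sum>\<beta>\<in>wedge_index k. T_tensor b j \<beta> * V (a, \<beta>))"
    using assms by (simp add: sum_subtractf)
  also have "\<dots> = Wf V b a j - Wf V a b j"
    using assms by (simp add: sumT[where V="\<lambda>\<beta>. V (b, \<beta>)"] sumT[where V="\<lambda>\<beta>. V (a, \<beta>)"] Wf_def)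
  finally show ?thesis .
qed

lemma W_zero:
  assumes sym: "\<And>x p q. x < k \<Longrightarrow> p < k \<Longrightarrow> q < k \<Longrightarrow> Wf V p x q = Wf V x p q"
    and "x < k" "p < k" "q < k"
  shows "Wf V x p q = 0"
proof -
  have anti: "Wf V x p q = - Wf V x q p" for x p q by (auto simp: Wf_def)
  have "Wf V x p q = Wf V p x q" using sym[of x p q] assms by simp
  also have "\<dots> = - Wf V p q x" by (rule anti)
  also have "\<dots> = - Wf V q p x" using sym[of p q x] assms by simp
  also have "\<dots> = Wf V q x p" using anti[of q p x] by simp
  also have "\<dots> = Wf V x q p" using sym[of q x p] assms by simp
  also have "\<dots> = - Wf V x p q" using anti[of x q p] by simp
  finally show ?thesis by simp
qed

lemma det_T_nonzero:
  assumes h: "bij_betw h {0..<N} ({..<k} \<times> wedge_index k)"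
  shows "det (Mf h N T_tensor) \<noteq> 0"
proof
  assume "det (Mf h N T_tensor) = 0"
  then obtain v where v: "v \<in> carrier_vec N" "v \<noteq> 0\<^sub>v N" "Mf h N T_tensor *\<^sub>v v = 0\<^sub>v N"
    using det_0_iff_vec_prod_zero[of "Mf h N T_tensor" N] by (auto simp: Mf_def)
  define g where "g = inv_into {0..<N} h"
  define V where "V d = v $ g d" for d
  have hg: "bij_betw g ({..<k} \<times> wedge_index k) {0..<N}" using h unfolding g_def by (rule bij_betw_inv_into)
  have gh: "g (h i) = i" if "i < N" for i
    unfolding g_def by (rule inv_into_f_f) (use h that in \<open>auto simp: bij_betw_def\<close>)
  have hD: "h i \<in> {..<k} \<times> wedge_index k" if "i < N" for i
    using bij_betw_apply[OF h] that by auto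
  have rows: "Wf V b a j = Wf V a b j" if "j < k" "a < b" "b < k" for j a b
  proof -
    have "(j, a, b) \<in> {..<k} \<times> wedge_index k" using that by (auto simp: wedge_index_def)
    then have "(j, a, b) \<in> h ` {0..<N}" using h by (simp add: bij_betw_def)
    then obtain i where i: "i < N" "h i = (j, a, b)" by auto
    have "0 = (Mf h N T_tensor *\<^sub>v v) $ i" using v(3) i by simp
    also have "\<dots> = (\<Sum>c\<in>{0..<N}. Kf T_tensor (h i) (h c) * v $ c)"
      using i v(1) by (simp add: Mf_def scalar_prod_def)
    also have "\<dots> = (\<Sum>c\<in>{0..<N}. Kf T_tensor (j, a, b) (h c) * V (h c))"
      using i gh by (intro sum.cong) (auto simp: V_def)
    also have "\<dots> = (\<Sum>d\<in>{..<k} \<times> wedge_index k. Kf T_tensor (j, a, b) d * V d)"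
      by (rule sum.reindex_bij_betw[OF h])
    also have "\<dots> = Wf V b a j - Wf V a b j" using that by (intro sumK) auto
    finally show ?thesis by simp
  qed
  have sym: "Wf V p x q = Wf V x p q" if "x < k" "p < k" "q < k" for x p q
  proof -
    consider "x < p" | "x = p" | "p < x" by linarith
    then show ?thesis
    proof cases
      case 1 then show ?thesis using rows[of q x p] that by simp
    next
      case 2 then show ?thesis by simp
    next
      case 3 then show ?thesis using rows[of q p x] that by simp
    qed
  qed
  have "v = 0\<^sub>v N"
  proof (rule eq_vecI)
    fix i assume "i < dim_vec (0\<^sub>v N :: complex vec)"
    then have i: "i < N" by simp
    obtain x p q where hi: "h i = (x, p, q)" "x < k" "p < q" "q < k"
      using hD[OF i] by (auto simp: wedge_index_def)
    have "v $ i = V (h i)" using gh i by (simp add: V_def)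
    also have "\<dots> = Wf V x p q" using hi by (simp add: Wf_def)
    also have "\<dots> = 0" using W_zero[of k V, OF sym] hi by simp
    finally show "v $ i = 0\<^sub>v N $ i" using i by simp
  qed (use v(1) in simp)
  then show False using v(2) by simp
qed

lemma tendsto_if0:
  fixes f :: "nat \<Rightarrow> complex"
  shows "(f \<longlongrightarrow> L) F \<Longrightarrow> ((\<lambda>n. if P then f n else 0) \<longlongrightarrow> (if P then L else 0)) F"
  by (cases P) auto

lemma det_tendsto:
  assumes h: "bij_betw h {0..<N} ({..<k} \<times> wedge_index k)"
    and conv: "\<And>i j p. i < k \<Longrightarrow> j < k \<Longrightarrow> p \<in> wedge_index k \<Longrightarrow>
        ((\<lambda>n. X n i j p) \<longlongrightarrow> T i j p) sequentially"
  shows "((\<lambda>n. det (Mf h N (X n))) \<longlongrightarrow> det (Mf h N T)) sequentially"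
proof -
  have hD: "h i \<in> {..<k} \<times> wedge_index k" if "i < N" for i
    using bij_betw_apply[OF h] that by auto
  have ent: "((\<lambda>n. Mf h N (X n) $$ (i, j)) \<longlongrightarrow> Mf h N T $$ (i, j)) sequentially"
    if i: "i < N" and j: "j < N" for i j
  proof -
    obtain j' a b where hi: "h i = (j', a, b)" "j' < k" "a < b" "b < k"
      using hD[OF i] by (auto simp: wedge_index_def)
    obtain x \<beta> where hj: "h j = (x, \<beta>)" "\<beta> \<in> wedge_index k"
      using hD[OF j] by auto
    have c1: "((\<lambda>n. X n a j' \<beta>) \<longlongrightarrow> T a j' \<beta>) sequentially" using conv hi hj by simp
    have c2: "((\<lambda>n. X n b j' \<beta>) \<longlongrightarrow> T b j' \<beta>) sequentially" using conv hi hj by simp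
    have e: "Mf h N Y $$ (i, j) = (if x = b then Y a j' \<beta> else 0) - (if x = a then Y b j' \<beta> else 0)" for Y
      using i j hi hj by (simp add: Mf_def Kf_def)
    show ?thesis unfolding e
      by (intro tendsto_diff tendsto_if0 c1 c2)
  qed
  have car: "Mf h N Y \<in> carrier_mat N N" for Y by (simp add: Mf_def)
  show ?thesis
    unfolding det_def'[OF car]
  proof (intro tendsto_sum tendsto_mult tendsto_const tendsto_prod)
    fix p i assume p: "p \<in> {p. p permutes {0..<N}}" and i: "i \<in> {0..<N}"
    then have "p i < N" using permutes_in_image by fastforce
    then show "((\<lambda>n. Mf h N (X n) $$ (i, p i)) \<longlongrightarrow> Mf h N T $$ (i, p i)) sequentially"
      using ent i by simp
  qed
qed

lemma card_w: "2 * card (wedge_index k) = k * (k - 1)"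
proof (induction k)
  case 0
  then show ?case by (simp add: wedge_index_def)
next
  case (Suc k)
  have eq: "wedge_index (Suc k) = wedge_index k \<union> (\<lambda>p. (p, k)) ` {..<k}"
    by (auto simp: wedge_index_def less_Suc_eq)
  have dis: "wedge_index k \<inter> (\<lambda>p. (p, k)) ` {..<k} = {}"
    by (auto simp: wedge_index_def)
  have "card (wedge_index (Suc k)) = card (wedge_index k) + card ((\<lambda>p. (p, k)) ` {..<k})"
    unfolding eq by (rule card_Un_disjoint) (use fin_w dis in auto)
  also have "card ((\<lambda>p. (p, k)) ` {..<k}) = k"
    by (subst card_image) (auto simp: inj_on_def)
  finally show ?case using Suc by (cases k) (auto simp: algebra_simps)
qed

lemma exists_br: "border_rank_le {..<k} {..<k} (wedge_index k) T_tensor (k*k)"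
proof -
  define a where "a = (\<lambda>(n::nat) l i. if i = l div k then (1::complex) else 0)"
  define b where "b = (\<lambda>(n::nat) l j. if j = l mod k then (1::complex) else 0)"
  define c where "c = (\<lambda>(n::nat) l p. T_tensor (l div k) (l mod k) p)"
  have "rank_one_sum (k*k) (a n) (b n) (c n) i j p = T_tensor i j p" if "i < k" "j < k" for n i j p
  proof -
    have iff: "(i = l div k \<and> j = l mod k) \<longleftrightarrow> l = i * k + j" for l
    proof
      assume "i = l div k \<and> j = l mod k" then show "l = i * k + j" by simp
    next
      assume "l = i * k + j" then show "i = l div k \<and> j = l mod k" using that by simp
    qed
    have "rank_one_sum (k*k) (a n) (b n) (c n) i j p = (\<Sum>l<k*k. if l = i * k + j then T_tensor i j p else 0)"
      unfolding rank_one_sum_def a_def b_def c_def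
      by (intro sum.cong refl) (use iff in auto)
    also have "\<dots> = T_tensor i j p"
    proof -
      have "i * k + j < (i + 1) * k" using that by simp
      also have "\<dots> \<le> k * k" using that by (intro mult_right_mono) auto
      finally have "i * k + j < k * k" .
      then show ?thesis by simp
    qed
    finally show ?thesis .
  qed
  then show ?thesis unfolding border_rank_le_def
    by (intro exI[of _ a] exI[of _ b] exI[of _ c]) auto
qed

theorem corollary1:
  fixes k :: nat
  assumes "k \<ge> 2"
  shows "of_int \<lceil>real k ^ 2 / 2\<rceil> \<le> real (border_rank {..<k} {..<k} (wedge_index k) T_tensor)
       \<and> \<lceil>real k ^ 2 / 2\<rceil> = int (k choose 2) + \<lceil>real k / 2\<rceil>"
proof
  define D where "D = {..<k} \<times> wedge_index k"
  define N where "N = card D"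
  have finD: "finite D" unfolding D_def using fin_w by simp
  obtain h where h: "bij_betw h {0..<N} D" using ex_bij_betw_nat_finite[OF finD] unfolding N_def by blast
  define r where "r = border_rank {..<k} {..<k} (wedge_index k) T_tensor"
  have "border_rank_le {..<k} {..<k} (wedge_index k) T_tensor r"
    unfolding r_def border_rank_def by (rule LeastI[where P="border_rank_le {..<k} {..<k} (wedge_index k) T_tensor", OF exists_br[of k]])
  then obtain a b c where conv: "\<And>i j p. i \<in> {..<k} \<Longrightarrow> j \<in> {..<k} \<Longrightarrow> p \<in> wedge_index k \<Longrightarrow>
        ((\<lambda>n. rank_one_sum r (a n) (b n) (c n) i j p) \<longlongrightarrow> T_tensor i j p) sequentially"
    unfolding border_rank_le_def by blast
  have lim: "((\<lambda>n. det (Mf h N (rank_one_sum r (a n) (b n) (c n)))) \<longlongrightarrow> det (Mf h N T_tensor)) sequentially"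
    by (rule det_tendsto[OF h[unfolded D_def]]) (use conv in auto)
  have "\<forall>\<^sub>F n in sequentially. det (Mf h N (rank_one_sum r (a n) (b n) (c n))) \<noteq> 0"
    by (rule tendsto_imp_eventually_ne[OF lim det_T_nonzero[OF h[unfolded D_def]]])
  then obtain n0 where n0: "\<forall>n\<ge>n0. det (Mf h N (rank_one_sum r (a n) (b n) (c n))) \<noteq> 0"
    unfolding eventually_sequentially by blast
  have le: "N \<le> r * (k - 1)"
  proof (rule ccontr)
    assume "\<not> N \<le> r * (k - 1)"
    then have "r * (k - 1) < N" by simp
    from det_rank_sum_zero[OF h[unfolded D_def] this assms] n0 show False by blast
  qed
  have "2 * N = k * (k * (k - 1))"
    unfolding N_def D_def card_cartesian_product using card_w[of k] by (simp add: algebra_simps)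
  then have "(k * k) * (k - 1) \<le> (2 * r) * (k - 1)" using le by (simp add: algebra_simps)
  moreover have "k - 1 > 0" using assms by simp
  ultimately have kk: "k * k \<le> 2 * r" by (simp only: mult_le_cancel2)
  have "real (k * k) \<le> real (2 * r)" using kk by (simp only: of_nat_le_iff)
  then have "real k ^ 2 / 2 \<le> real r"
    by (simp add: power2_eq_square)
  then have "\<lceil>real k ^ 2 / 2\<rceil> \<le> int r" by (simp add: ceiling_le_iff)
  then show "of_int \<lceil>real k ^ 2 / 2\<rceil> \<le> real (border_rank {..<k} {..<k} (wedge_index k) T_tensor)"
    unfolding r_def by linarith
next
  show "\<lceil>real k ^ 2 / 2\<rceil> = int (k choose 2) + \<lceil>real k / 2\<rceil>"
  proof (cases "even k")
    case True
    then obtain t where t: "k = 2 * t" by blast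
    have c2: "k choose 2 = t * (2 * t - 1)" unfolding choose_two t
      by (cases t) (auto simp: algebra_simps)
    have "t \<ge> 1" using assms t by simp
    then have "int (k choose 2) = 2 * int t * int t - int t" unfolding c2
      by (simp add: of_nat_diff algebra_simps)
    moreover have "real k ^ 2 / 2 = of_int (2 * int t * int t)" using t by (simp add: power2_eq_square)
    moreover have "real k / 2 = of_int (int t)" using t by simp
    ultimately show ?thesis by (simp only: ceiling_of_int)
  next
    case False
    then obtain t where t: "k = 2 * t + 1" using oddE by blast
    have c2: "k choose 2 = t * (2 * t + 1)" unfolding choose_two t by (simp add: algebra_simps)
    have "\<lceil>real k ^ 2 / 2\<rceil> = 2 * int t * int t + 2 * int t + 1"
      by (rule ceiling_unique) (simp_all add: t power2_eq_square algebra_simps)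
    moreover have "\<lceil>real k / 2\<rceil> = int t + 1"
      by (rule ceiling_unique) (simp_all add: t algebra_simps)
    ultimately show ?thesis unfolding c2 by (simp add: algebra_simps)
  qed
qed

end
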